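(* For an arbitrary integer $k\ge 3$ and an arbitrary integer $n$ with $\frac{k+1}{2} \leq n \leq k$, there exists a finite simple graph $G$ with an edge $e$ such that $\chi_\rho(G)=k$ and $\chi_\rho(G-e)=n$.
   Context: A $k$-packing coloring of a graph $G$ is a map $c:V(G)\to\{1,\ldots,k\}$ such that two distinct vertices $u,v$ with $c(u)=c(v)=i$ satisfy $d_G(u,v)>i$ (distance between vertices in different components is infinite). The packing chromatic number $\chi_\rho(G)$ is the smallest $k$ for which $G$ admits a $k$-packing coloring. $G-e$ denotes the graph obtained by deleting the edge $e$. *)

theory Defs
  imports Main "HOL-Library.Extended_Nat"
begin

definition finite_simple_graph :: "'a set \<Rightarrow> 'a set set \<Rightarrow> bool" where
  "finite_simple_graph V E \<longleftrightarrow> finite V \<and> (\<forall>e\<in>E. e \<subseteq> V \<and> card e = 2)"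

definition is_walk :: "'a set \<Rightarrow> 'a set set \<Rightarrow> 'a list \<Rightarrow> bool" where
  "is_walk V E xs \<longleftrightarrow> xs \<noteq> [] \<and> set xs \<subseteq> V \<and>
     (\<forall>i. Suc i < length xs \<longrightarrow> {xs ! i, xs ! Suc i} \<in> E)"

text \<open>Graph distance; infinite if there is no walk (different components).\<close>
definition gdist :: "'a set \<Rightarrow> 'a set set \<Rightarrow> 'a \<Rightarrow> 'a \<Rightarrow> enat" where
  "gdist V E u v = (INF xs \<in> {xs. is_walk V E xs \<and> hd xs = u \<and> last xs = v}.
                      enat (length xs - 1))"

definition packing_coloring :: "'a set \<Rightarrow> 'a set set \<Rightarrow> nat \<Rightarrow> ('a \<Rightarrow> nat) \<Rightarrow> bool" where
  "packing_coloring V E k c \<longleftrightarrow> (\<forall>v\<in>V. c v \<in> {1..k}) \<and>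
     (\<forall>u\<in>V. \<forall>v\<in>V. u \<noteq> v \<and> c u = c v \<longrightarrow> enat (c u) < gdist V E u v)"

definition packing_chromatic_number :: "'a set \<Rightarrow> 'a set set \<Rightarrow> nat" where
  "packing_chromatic_number V E = (LEAST k. \<exists>c. packing_coloring V E k c)"

end

theory Submission
  imports Defs
begin


lemma gdist_ge:
  assumes "\<And>xs. is_walk V E xs \<Longrightarrow> hd xs = u \<Longrightarrow> last xs = v \<Longrightarrow> m \<le> length xs - 1"
  shows "enat m \<le> gdist V E u v"
  unfolding gdist_def
proof (rule INF_greatest)
  fix xs assume "xs \<in> {xs. is_walk V E xs \<and> hd xs = u \<and> last xs = v}"
  then show "enat m \<le> enat (length xs - 1)" using assms by auto
qed

lemma gdist_le:
  assumes "is_walk V E xs" "hd xs = u" "last xs = v"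
  shows "gdist V E u v \<le> enat (length xs - 1)"
  unfolding gdist_def by (rule INF_lower2[of xs]) (use assms in auto)

lemma walk_pot:
  assumes "is_walk V E xs" "\<forall>a b. {a,b} \<in> E \<longrightarrow> \<bar>f a - f b\<bar> \<le> (1::int)"
  shows "i < length xs \<Longrightarrow> \<bar>f (xs!0) - f (xs!i)\<bar> \<le> int i"
proof (induction i)
  case 0 then show ?case by simp
next
  case (Suc i)
  then have "{xs!i, xs!Suc i} \<in> E" using assms(1) unfolding is_walk_def by auto
  then have "\<bar>f (xs!i) - f (xs!Suc i)\<bar> \<le> 1" using assms(2) by blast
  with Suc show ?case by linarith
qed

lemma pot_gdist:
  assumes "\<forall>a b. {a,b} \<in> E \<longrightarrow> \<bar>f a - f b\<bar> \<le> (1::int)"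
  shows "enat (nat \<bar>f u - f v\<bar>) \<le> gdist V E u v"
proof (rule gdist_ge)
  fix xs assume w: "is_walk V E xs" and h: "hd xs = u" and l: "last xs = v"
  have ne: "xs \<noteq> []" using w unfolding is_walk_def by auto
  have "\<bar>f (xs!0) - f (xs!(length xs - 1))\<bar> \<le> int (length xs - 1)"
    using walk_pot[OF w assms] ne by simp
  moreover have "xs!0 = u" using h ne by (simp add: hd_conv_nth)
  moreover have "xs!(length xs - 1) = v" using l ne by (simp add: last_conv_nth)
  ultimately show "nat \<bar>f u - f v\<bar> \<le> length xs - 1" by simp
qed

lemma nonadj_gdist:
  assumes "u \<noteq> v" "{u,v} \<notin> E"
  shows "enat 2 \<le> gdist V E u v"
proof (rule gdist_ge)
  fix xs assume w: "is_walk V E xs" and h: "hd xs = u" and l: "last xs = v"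
  have ne: "xs \<noteq> []" using w unfolding is_walk_def by auto
  show "2 \<le> length xs - 1"
  proof (rule ccontr)
    assume "\<not> 2 \<le> length xs - 1"
    moreover have "length xs \<noteq> 0" using ne by simp
    ultimately have "length xs = 1 \<or> length xs = 2" by linarith
    then show False
    proof
      assume "length xs = 1"
      then obtain a where "xs = [a]" by (cases xs) auto
      then show False using h l assms by simp
    next
      assume L: "length xs = 2"
      then obtain a b where xs: "xs = [a,b]"
        by (cases xs; cases "tl xs") auto
      then have "{a,b} \<in> E" using w unfolding is_walk_def by auto
      then show False using xs h l assms by simp
    qed
  qed
qed

lemma walk2: "a \<in> V \<Longrightarrow> b \<in> V \<Longrightarrow> {a,b} \<in> E \<Longrightarrow> gdist V E a b \<le> enat 1"
  using gdist_le[of V E "[a,b]" a b] unfolding is_walk_def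
  by (auto simp: less_Suc_eq eval_nat_numeral)

lemma walk3: "a \<in> V \<Longrightarrow> b \<in> V \<Longrightarrow> c \<in> V \<Longrightarrow> {a,b} \<in> E \<Longrightarrow> {b,c} \<in> E \<Longrightarrow> gdist V E a c \<le> enat 2"
  using gdist_le[of V E "[a,b,c]" a c] unfolding is_walk_def
  by (auto simp: less_Suc_eq eval_nat_numeral)

lemma walk4: "a \<in> V \<Longrightarrow> b \<in> V \<Longrightarrow> c \<in> V \<Longrightarrow> d \<in> V \<Longrightarrow> {a,b} \<in> E \<Longrightarrow> {b,c} \<in> E \<Longrightarrow> {c,d} \<in> E \<Longrightarrow> gdist V E a d \<le> enat 3"
  using gdist_le[of V E "[a,b,c,d]" a d] unfolding is_walk_def
  by (auto simp: less_Suc_eq eval_nat_numeral)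

lemma pc_range: "packing_coloring V E K c \<Longrightarrow> v \<in> V \<Longrightarrow> 1 \<le> c v \<and> c v \<le> K"
  unfolding packing_coloring_def by auto

lemma inj_card:
  assumes "inj_on c T" "c ` T \<subseteq> {a..K}" "finite T"
  shows "card T \<le> K + 1 - a"
proof -
  have "card T = card (c ` T)" using assms(1) by (simp add: card_image)
  also have "\<dots> \<le> card {a..K}" by (rule card_mono) (use assms in auto)
  finally show ?thesis by simp
qed

lemma pcn_eq:
  assumes "packing_coloring V E K c" "\<And>K' c'. packing_coloring V E K' c' \<Longrightarrow> K \<le> K'"
  shows "packing_chromatic_number V E = K"
  unfolding packing_chromatic_number_def
proof (rule Least_equality)
  show "\<exists>c. packing_coloring V E K c" using assms(1) by blast
next
  fix y assume "\<exists>c. packing_coloring V E y c"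
  then obtain c' where "packing_coloring V E y c'" by blast
  then show "K \<le> y" by (rule assms(2))
qed

lemma pc_mono:
  assumes "packing_coloring V E K c" "E' \<subseteq> E"
  shows "packing_coloring V E' K c"
proof -
  have "gdist V E u v \<le> gdist V E' u v" for u v
    unfolding gdist_def
  proof (rule INF_mono)
    fix xs assume "xs \<in> {xs. is_walk V E' xs \<and> hd xs = u \<and> last xs = v}"
    then have "xs \<in> {xs. is_walk V E xs \<and> hd xs = u \<and> last xs = v}"
      using assms(2) unfolding is_walk_def by blast
    then show "\<exists>ys\<in>{xs. is_walk V E xs \<and> hd xs = u \<and> last xs = v}. enat (length ys - 1) \<le> enat (length xs - 1)"
      by blast
  qed
  note m = this
  show ?thesis unfolding packing_coloring_def
  proof (intro conjI ballI impI)
    fix v assume "v \<in> V" then show "c v \<in> {1..K}" using assms(1) unfolding packing_coloring_def by blast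
  next
    fix u v assume uv: "u \<in> V" "v \<in> V" "u \<noteq> v \<and> c u = c v"
    then have "enat (c u) < gdist V E u v" using assms(1) unfolding packing_coloring_def by blast
    then show "enat (c u) < gdist V E' u v" using m[of u v] by (rule less_le_trans)
  qed
qed

lemma pc_lt:
  assumes "packing_coloring V E K c" "u \<in> V" "v \<in> V" "u \<noteq> v" "c u = c v" "gdist V E u v \<le> enat m"
  shows "c u < m"
proof -
  have "enat (c u) < gdist V E u v" using assms(1-5) unfolding packing_coloring_def by blast
  then have "enat (c u) < enat m" using assms(6) by (rule less_le_trans)
  then show ?thesis by simp
qed

lemma clique_card:
  assumes "packing_coloring V E K c" "T \<subseteq> V" "finite T"
    "\<And>a b. a \<in> T \<Longrightarrow> b \<in> T \<Longrightarrow> a \<noteq> b \<Longrightarrow> {a,b} \<in> E"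
  shows "card T \<le> K"
proof -
  have "inj_on c T"
  proof (rule inj_onI)
    fix a b assume ab: "a \<in> T" "b \<in> T" "c a = c b"
    show "a = b"
    proof (rule ccontr)
      assume "a \<noteq> b"
      have aV: "a \<in> V" and bV: "b \<in> V" using ab assms(2) by auto
      have "gdist V E a b \<le> enat 1" using walk2[OF aV bV assms(4)[OF ab(1,2) \<open>a \<noteq> b\<close>]] .
      then have "c a < 1" by (rule pc_lt[OF assms(1) aV bV \<open>a \<noteq> b\<close> ab(3)])
      moreover have "1 \<le> c a" using pc_range[OF assms(1) aV] by blast
      ultimately show False by simp
    qed
  qed
  moreover have "c ` T \<subseteq> {1..K}"
  proof
    fix y assume "y \<in> c ` T"
    then obtain a where a: "a \<in> T" "y = c a" by blast
    have "1 \<le> c a \<and> c a \<le> K" using pc_range[OF assms(1)] assms(2) a(1) by blast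
    then show "y \<in> {1..K}" using a(2) by simp
  qed
  ultimately show ?thesis using inj_card[of c T 1 K] assms(3) by simp
qed

lemma card_ge2:
  assumes "packing_coloring V E K c" "T \<subseteq> V" "finite T"
    "\<And>a. a \<in> T \<Longrightarrow> c a \<noteq> 1"
    "\<And>a b. a \<in> T \<Longrightarrow> b \<in> T \<Longrightarrow> a \<noteq> b \<Longrightarrow>
        gdist V E a b \<le> enat 2 \<or> (gdist V E a b \<le> enat 3 \<and> (c a \<noteq> 2 \<or> c b \<noteq> 2))"
  shows "card T \<le> K - 1"
proof -
  have "inj_on c T"
  proof (rule inj_onI)
    fix a b assume ab: "a \<in> T" "b \<in> T" "c a = c b"
    show "a = b"
    proof (rule ccontr)
      assume ne: "a \<noteq> b"
      have aV: "a \<in> V" and bV: "b \<in> V" using ab assms(2) by auto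
      have r: "1 \<le> c a" using pc_range[OF assms(1) aV] by blast
      have "c a \<noteq> 1" using assms(4) ab by blast
      from assms(5)[OF ab(1,2) ne] show False
      proof
        assume "gdist V E a b \<le> enat 2"
        then have "c a < 2" by (rule pc_lt[OF assms(1) aV bV ne ab(3)])
        with r \<open>c a \<noteq> 1\<close> show False by simp
      next
        assume h: "gdist V E a b \<le> enat 3 \<and> (c a \<noteq> 2 \<or> c b \<noteq> 2)"
        then have "c a < 3" using pc_lt[OF assms(1) aV bV ne ab(3)] by blast
        with r \<open>c a \<noteq> 1\<close> h ab(3) show False by simp
      qed
    qed
  qed
  moreover have "c ` T \<subseteq> {2..K}"
  proof
    fix y assume "y \<in> c ` T"
    then obtain a where a: "a \<in> T" "y = c a" by blast
    have "1 \<le> c a \<and> c a \<le> K" using pc_range[OF assms(1)] assms(2) a(1) by blast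
    moreover have "c a \<noteq> 1" using assms(4) a(1) by blast
    ultimately show "y \<in> {2..K}" using a(2) by simp
  qed
  ultimately show ?thesis using inj_card[of c T 2 K] assms(3) by simp
qed

lemma hub_one:
  assumes pc: "packing_coloring V E K c" and "H \<subseteq> V" "L \<subseteq> V" "finite H" "finite L"
    "H \<inter> L = {}" "h \<in> H" "c h = 1"
    and HH: "\<And>a b. a \<in> H \<Longrightarrow> b \<in> H \<Longrightarrow> a \<noteq> b \<Longrightarrow> {a,b} \<in> E"
    and HL: "\<And>a b. a \<in> H \<Longrightarrow> b \<in> L \<Longrightarrow> {a,b} \<in> E"
  shows "card L + card H \<le> K"
proof -
  let ?T = "L \<union> (H - {h})"
  have TV: "?T \<subseteq> V" using assms by auto
  have adjh: "{h,t} \<in> E" if "t \<in> ?T" for t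
    using that HH HL assms(7) by auto
  have hT: "h \<notin> ?T" using assms(6,7) by auto
  have hV: "h \<in> V" using assms by auto
  have "card ?T \<le> K - 1"
  proof (rule card_ge2[OF pc TV])
    show "finite ?T" using assms by auto
    show "c a \<noteq> 1" if "a \<in> ?T" for a
    proof
      assume "c a = 1"
      have "a \<noteq> h" using that hT by auto
      have aV: "a \<in> V" using that TV by blast
      have ha: "h \<noteq> a" using \<open>a \<noteq> h\<close> by simp
      have ce: "c h = c a" using \<open>c a = 1\<close> assms(8) by simp
      have "c h < 1" using pc_lt[OF pc hV aV ha ce walk2[OF hV aV adjh[OF that]]] .
      then show False using assms(8) by simp
    qed
    show "gdist V E a b \<le> enat 2 \<or> (gdist V E a b \<le> enat 3 \<and> (c a \<noteq> 2 \<or> c b \<noteq> 2))"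
      if "a \<in> ?T" "b \<in> ?T" "a \<noteq> b" for a b
    proof -
      have aV: "a \<in> V" and bV: "b \<in> V" using that TV by auto
      have "{a,h} \<in> E" using adjh[OF that(1)] by (simp add: insert_commute)
      then have "gdist V E a b \<le> enat 2"
        using walk3[OF aV hV bV _ adjh[OF that(2)]] by simp
      then show ?thesis by blast
    qed
  qed
  moreover have "card ?T = card L + (card H - 1)"
  proof -
    have d: "L \<inter> (H - {h}) = {}" using assms(6) by blast
    have "card ?T = card L + card (H - {h})"
      by (rule card_Un_disjoint) (use assms(4,5) d in auto)
    moreover have "card (H - {h}) = card H - 1" using assms(7) by simp
    ultimately show ?thesis by simp
  qed
  moreover have "card H \<ge> 1"
  proof -
    have "0 < card H" using assms(4,7) card_gt_0_iff by blast
    then show ?thesis by simp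
  qed
  moreover have "K \<ge> 1" using pc_range[OF pc hV] assms(8) by simp
  ultimately show ?thesis by linarith
qed




definition VV :: "nat \<Rightarrow> nat \<Rightarrow> nat \<Rightarrow> nat set" where
  "VV p q s = {..<p+s+q+s}"

definition adj :: "nat \<Rightarrow> nat \<Rightarrow> nat \<Rightarrow> nat \<Rightarrow> nat \<Rightarrow> bool" where
  "adj p q s a b \<longleftrightarrow> (a < p \<and> b < p \<and> a \<noteq> b) \<or> (a < p \<and> p \<le> b \<and> b < p+s)
     \<or> (p+s \<le> a \<and> a < p+s+q \<and> p+s \<le> b \<and> b < p+s+q \<and> a \<noteq> b)
     \<or> (p+s \<le> a \<and> a < p+s+q \<and> p+s+q \<le> b \<and> b < p+s+q+s) \<or> (a = p \<and> b = p+s+q \<and> 0 < s)"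

definition EE :: "nat \<Rightarrow> nat \<Rightarrow> nat \<Rightarrow> nat set set" where
  "EE p q s = {{a,b} | a b. adj p q s a b}"

lemma EE_iff: "{x,y} \<in> EE p q s \<longleftrightarrow> adj p q s x y \<or> adj p q s y x"
  unfolding EE_def by (auto simp: doubleton_eq_iff)

lemma EE_cases: "e \<in> EE p q s \<Longrightarrow> \<exists>a b. e = {a,b} \<and> adj p q s a b"
  unfolding EE_def by blast

lemma adj_ne: "adj p q s a b \<Longrightarrow> a \<noteq> b"
  unfolding adj_def by auto

lemma adj_V: "adj p q s a b \<Longrightarrow> a \<in> VV p q s \<and> b \<in> VV p q s"
  unfolding adj_def VV_def by auto

lemma fsg: "finite_simple_graph (VV p q s) (EE p q s)"
  unfolding finite_simple_graph_def
proof
  show "finite (VV p q s)" unfolding VV_def by simp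
  show "\<forall>e\<in>EE p q s. e \<subseteq> VV p q s \<and> card e = 2"
  proof
    fix e assume "e \<in> EE p q s"
    then obtain a b where e: "e = {a,b}" "adj p q s a b" using EE_cases by blast
    then show "e \<subseteq> VV p q s \<and> card e = 2" using adj_V[OF e(2)] adj_ne[OF e(2)] by auto
  qed
qed

definition fG :: "nat \<Rightarrow> nat \<Rightarrow> nat \<Rightarrow> nat \<Rightarrow> int" where
  "fG p q s x = (if x < p then 0 else if x < p+s then 1 else if x < p+s+q then 3 else 2)"

lemma pot_G: "\<forall>a b. {a,b} \<in> EE p q s \<longrightarrow> \<bar>fG p q s a - fG p q s b\<bar> \<le> 1"
  unfolding EE_iff adj_def fG_def by auto

definition fGe :: "nat \<Rightarrow> nat \<Rightarrow> nat \<Rightarrow> nat \<Rightarrow> int" where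
  "fGe p s M x = (if x < p+s then 0 else int M)"

lemma pot_Ge: "\<forall>a b. {a,b} \<in> EE p q s - {{p,p+s+q}} \<longrightarrow> \<bar>fGe p s M a - fGe p s M b\<bar> \<le> 1"
proof (intro allI impI)
  fix a b assume h: "{a,b} \<in> EE p q s - {{p,p+s+q}}"
  then have "adj p q s a b \<or> adj p q s b a" using EE_iff by blast
  moreover have "\<not> (a = p \<and> b = p+s+q) \<and> \<not> (a = p+s+q \<and> b = p)" using h by auto
  ultimately show "\<bar>fGe p s M a - fGe p s M b\<bar> \<le> 1"
    unfolding adj_def fGe_def by auto
qed

definition cG :: "nat \<Rightarrow> nat \<Rightarrow> nat \<Rightarrow> nat \<Rightarrow> nat" where
  "cG p q s x = (if x < p then x + 2 else if x = p then p + q + 1 else if x < p+s then 1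
     else if x = p+s then 2 else if x < p+s+q then x + 1 - s else 1)"

lemma cG_range: "x \<in> VV p q s \<Longrightarrow> 1 \<le> q \<Longrightarrow> q \<le> p \<Longrightarrow> 1 \<le> s \<Longrightarrow> 1 \<le> cG p q s x \<and> cG p q s x \<le> p + q + 1"
  unfolding VV_def cG_def by auto

lemma cG_same:
  assumes "u \<in> VV p q s" "v \<in> VV p q s" "u \<noteq> v" "cG p q s u = cG p q s v"
    "1 \<le> q" "q \<le> p" "1 \<le> s"
  shows "(cG p q s u = 1 \<and> \<not> adj p q s u v \<and> \<not> adj p q s v u) \<or> (u = 0 \<and> v = p+s) \<or> (u = p+s \<and> v = 0)"
proof -
  have A: "cG p q s x = 1 \<longleftrightarrow> (p < x \<and> x < p + s) \<or> p+s+q \<le> x" if "x \<in> VV p q s" for x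
    using that assms(5-7) unfolding VV_def cG_def by auto
  have B: "cG p q s x = 2 \<longleftrightarrow> x = 0 \<or> x = p + s" if "x \<in> VV p q s" for x
    using that assms(5-7) unfolding VV_def cG_def by auto
  have C: "x = y" if "x \<in> VV p q s" "y \<in> VV p q s" "cG p q s x = cG p q s y" "cG p q s x \<ge> 3" for x y
    using that assms(5-7) unfolding VV_def cG_def by (auto split: if_splits)
  have "1 \<le> cG p q s u" using cG_range[OF assms(1) assms(5-7)] by blast
  then have "cG p q s u = 1 \<or> cG p q s u = 2 \<or> cG p q s u \<ge> 3" by linarith
  then show ?thesis
  proof (elim disjE)
    assume h: "cG p q s u = 1"
    then have "(p < u \<and> u < p + s) \<or> p+s+q \<le> u" "(p < v \<and> v < p + s) \<or> p+s+q \<le> v"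
      using A assms(1,2,4) by auto
    then have "\<not> adj p q s u v \<and> \<not> adj p q s v u" unfolding adj_def by auto
    then show ?thesis using h by blast
  next
    assume h: "cG p q s u = 2"
    have hu: "u = 0 \<or> u = p + s" using B[OF assms(1)] h by simp
    have hv: "v = 0 \<or> v = p + s" using B[OF assms(2)] h assms(4) by simp
    show ?thesis using assms(3) hu hv by auto
  next
    assume "cG p q s u \<ge> 3" then show ?thesis using C assms(1-4) by blast
  qed
qed

lemma colG:
  assumes "1 \<le> q" "q \<le> p" "1 \<le> s"
  shows "packing_coloring (VV p q s) (EE p q s) (p+q+1) (cG p q s)"
  unfolding packing_coloring_def
proof (intro conjI ballI impI)
  fix v assume "v \<in> VV p q s"
  then show "cG p q s v \<in> {1..p+q+1}" using cG_range[OF _ assms] by auto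
next
  fix u v assume uv: "u \<in> VV p q s" "v \<in> VV p q s" "u \<noteq> v \<and> cG p q s u = cG p q s v"
  from cG_same[OF uv(1,2) _ _ assms] uv(3)
  have "(cG p q s u = 1 \<and> \<not> adj p q s u v \<and> \<not> adj p q s v u) \<or> (u = 0 \<and> v = p+s) \<or> (u = p+s \<and> v = 0)"
    by blast
  then show "enat (cG p q s u) < gdist (VV p q s) (EE p q s) u v"
  proof (elim disjE)
    assume h: "cG p q s u = 1 \<and> \<not> adj p q s u v \<and> \<not> adj p q s v u"
    then have "{u,v} \<notin> EE p q s" using EE_iff by blast
    then have le: "enat 2 \<le> gdist (VV p q s) (EE p q s) u v" using nonadj_gdist[of u v] uv(3) by simp
    have lt: "enat (cG p q s u) < enat 2" using h by simp
    show ?thesis by (rule less_le_trans[OF lt le])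
  next
    assume h: "u = 0 \<and> v = p + s"
    have "enat (nat \<bar>fG p q s u - fG p q s v\<bar>) \<le> gdist (VV p q s) (EE p q s) u v"
      by (rule pot_gdist[OF pot_G])
    moreover have "nat \<bar>fG p q s u - fG p q s v\<bar> = 3" using h assms unfolding fG_def by auto
    moreover have "cG p q s u = 2" using h assms unfolding cG_def by auto
    ultimately have le: "enat 3 \<le> gdist (VV p q s) (EE p q s) u v" and lt: "enat (cG p q s u) < enat 3" by simp_all
    show ?thesis by (rule less_le_trans[OF lt le])
  next
    assume h: "u = p + s \<and> v = 0"
    have "enat (nat \<bar>fG p q s u - fG p q s v\<bar>) \<le> gdist (VV p q s) (EE p q s) u v"
      by (rule pot_gdist[OF pot_G])
    moreover have "nat \<bar>fG p q s u - fG p q s v\<bar> = 3" using h assms unfolding fG_def by auto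
    moreover have "cG p q s u = 2" using h assms unfolding cG_def by auto
    ultimately have le: "enat 3 \<le> gdist (VV p q s) (EE p q s) u v" and lt: "enat (cG p q s u) < enat 3" by simp_all
    show ?thesis by (rule less_le_trans[OF lt le])
  qed
qed

definition cGe :: "nat \<Rightarrow> nat \<Rightarrow> nat \<Rightarrow> nat \<Rightarrow> nat" where
  "cGe p q s x = (if x < p then x + 2 else if x < p+s then 1 else if x < p+s+q then x - (p+s) + 2 else 1)"

lemma cGe_one: "cGe p q s x = 1 \<longleftrightarrow> (p \<le> x \<and> x < p + s) \<or> p+s+q \<le> x"
  unfolding cGe_def by auto

lemma cGe_same:
  assumes "u \<in> VV p q s" "v \<in> VV p q s" "u \<noteq> v" "cGe p q s u = cGe p q s v" "q \<le> p"
  shows "(cGe p q s u = 1 \<and> {u,v} \<notin> EE p q s - {{p,p+s+q}})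
    \<or> ((u < p+s \<longleftrightarrow> \<not> v < p+s) \<and> cGe p q s u \<le> p + 1)"
proof (cases "cGe p q s u = 1")
  case True
  then have a: "(p \<le> u \<and> u < p + s) \<or> p+s+q \<le> u" "(p \<le> v \<and> v < p + s) \<or> p+s+q \<le> v"
    using assms(4) cGe_one by metis+
  have "{u,v} \<notin> EE p q s - {{p,p+s+q}}"
  proof
    assume "{u,v} \<in> EE p q s - {{p,p+s+q}}"
    then have ad: "adj p q s u v \<or> adj p q s v u" and ne: "{u,v} \<noteq> {p,p+s+q}" using EE_iff by auto
    from ne have ne2: "\<not> (u = p \<and> v = p+s+q)" "\<not> (v = p \<and> u = p+s+q)" by auto
    from ad show False using a ne2 unfolding adj_def by linarith
  qed
  then show ?thesis using True by blast
next
  case False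
  have F2: "cGe p q s v \<noteq> 1" using False assms(4) by simp
  have reg: "x < p \<or> (p + s \<le> x \<and> x < p+s+q)" if "cGe p q s x \<noteq> 1" for x
    using that cGe_one[of p q s x] by linarith
  have c1: "cGe p q s x = x + 2" if "x < p" for x using that unfolding cGe_def by simp
  have c2: "cGe p q s x = x - (p+s) + 2" if "p + s \<le> x" "x < p+s+q" for x
    using that unfolding cGe_def by simp
  from reg[OF False] reg[OF F2]
  show ?thesis
  proof (elim disjE conjE)
    assume "u < p" "v < p" then show ?thesis using c1 assms(3,4) by simp
  next
    assume "u < p" "p + s \<le> v" "v < p+s+q" then show ?thesis using c1 by simp
  next
    assume "p + s \<le> u" "u < p+s+q" "v < p" then show ?thesis using c2 assms(5) by simp
  next
    assume "p + s \<le> u" "u < p+s+q" "p + s \<le> v" "v < p+s+q"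
    then show ?thesis using c2 assms(3,4) by simp
  qed
qed

lemma colGe:
  assumes "q \<le> p"
  shows "packing_coloring (VV p q s) (EE p q s - {{p,p+s+q}}) (p+1) (cGe p q s)"
  unfolding packing_coloring_def
proof (intro conjI ballI impI)
  fix v assume "v \<in> VV p q s"
  then show "cGe p q s v \<in> {1..p+1}" using assms unfolding cGe_def VV_def by auto
next
  fix u v assume uv: "u \<in> VV p q s" "v \<in> VV p q s" "u \<noteq> v \<and> cGe p q s u = cGe p q s v"
  from cGe_same[OF uv(1,2) _ _ assms] uv(3)
  have "(cGe p q s u = 1 \<and> {u,v} \<notin> EE p q s - {{p,p+s+q}})
    \<or> ((u < p+s \<longleftrightarrow> \<not> v < p+s) \<and> cGe p q s u \<le> p + 1)" by blast
  then show "enat (cGe p q s u) < gdist (VV p q s) (EE p q s - {{p,p+s+q}}) u v"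
  proof (elim disjE)
    assume h: "cGe p q s u = 1 \<and> {u,v} \<notin> EE p q s - {{p,p+s+q}}"
    then have le: "enat 2 \<le> gdist (VV p q s) (EE p q s - {{p,p+s+q}}) u v" using nonadj_gdist[of u v] uv(3) by simp
    have lt: "enat (cGe p q s u) < enat 2" using h by simp
    show ?thesis by (rule less_le_trans[OF lt le])
  next
    assume h: "(u < p+s \<longleftrightarrow> \<not> v < p+s) \<and> cGe p q s u \<le> p + 1"
    have "enat (nat \<bar>fGe p s (p+2) u - fGe p s (p+2) v\<bar>) \<le> gdist (VV p q s) (EE p q s - {{p,p+s+q}}) u v"
      by (rule pot_gdist[OF pot_Ge])
    moreover have "nat \<bar>fGe p s (p+2) u - fGe p s (p+2) v\<bar> = p + 2"
    proof (cases "u < p + s")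
      case True
      then have "\<not> v < p + s" using h by blast
      then show ?thesis using True unfolding fGe_def by simp
    next
      case False
      then have "v < p + s" using h by blast
      then show ?thesis using False unfolding fGe_def by simp
    qed
    moreover have "enat (cGe p q s u) < enat (p+2)" using h by simp
    ultimately have le: "enat (p+2) \<le> gdist (VV p q s) (EE p q s - {{p,p+s+q}}) u v"
      and lt: "enat (cGe p q s u) < enat (p+2)" by simp_all
    show ?thesis by (rule less_le_trans[OF lt le])
  qed
qed

lemma lowGe:
  assumes "packing_coloring (VV p q s) (EE p q s - {{p,p+s+q}}) K c" "1 \<le> s"
  shows "p + 1 \<le> K"
proof -
  have "card {..p} \<le> K"
  proof (rule clique_card[OF assms(1)])
    show "{..p} \<subseteq> VV p q s" using assms(2) unfolding VV_def by auto
    show "finite {..p}" by simp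
    fix a b assume ab: "a \<in> {..p}" "b \<in> {..p}" "a \<noteq> b"
    then have "adj p q s a b \<or> adj p q s b a" using assms(2) unfolding adj_def by auto
    moreover have "{a,b} \<noteq> {p,p+s+q}" using ab assms(2) by (auto simp: doubleton_eq_iff)
    ultimately show "{a,b} \<in> EE p q s - {{p,p+s+q}}" using EE_iff by blast
  qed
  then show ?thesis by simp
qed

abbreviation adj2 where "adj2 p q s a b \<equiv> adj p q s a b \<or> adj p q s b a"

lemma distG:
  assumes "1 \<le> q" "1 \<le> s"
    and a: "a < p \<or> a = p \<or> a = p+s+q \<or> (p+s \<le> a \<and> a < p+s+q)"
    and b: "b < p \<or> b = p \<or> b = p+s+q \<or> (p+s \<le> b \<and> b < p+s+q)"
    and "a \<noteq> b"
  shows "gdist (VV p q s) (EE p q s) a b \<le> enat 2 \<or>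
    (((a < p \<and> p+s \<le> b \<and> b < p+s+q) \<or> (b < p \<and> p+s \<le> a \<and> a < p+s+q))
      \<and> gdist (VV p q s) (EE p q s) a b \<le> enat 3)"
proof -
  let ?V = "VV p q s" and ?E = "EE p q s"
  have inV: "x \<in> ?V" if "x < p+s+q+s" for x using that unfolding VV_def by simp
  have "a < p+s+q+s" using a assms(1,2) by linarith
  then have aV: "a \<in> ?V" by (rule inV)
  have "b < p+s+q+s" using b assms(1,2) by linarith
  then have bV: "b \<in> ?V" by (rule inV)
  have "p < p+s+q+s" using assms(1,2) by linarith
  then have xV: "p \<in> ?V" by (rule inV)
  have "p+s+q < p+s+q+s" using assms(1,2) by linarith
  then have yV: "p+s+q \<in> ?V" by (rule inV)
  have W1: "gdist ?V ?E x z \<le> enat 2" if "x \<in> ?V" "z \<in> ?V" "adj2 p q s x z" for x z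
  proof -
    have "{x,z} \<in> ?E" using that(3) EE_iff by blast
    then have "gdist ?V ?E x z \<le> enat 1" by (rule walk2[OF that(1,2)])
    moreover have "enat 1 \<le> enat 2" by simp
    ultimately show ?thesis by (rule order_trans)
  qed
  have W2: "gdist ?V ?E x z \<le> enat 2" if "x \<in> ?V" "m \<in> ?V" "z \<in> ?V" "adj2 p q s x m" "adj2 p q s m z" for x m z
  proof -
    have "{x,m} \<in> ?E" "{m,z} \<in> ?E" using that(4,5) EE_iff by blast+
    then show ?thesis by (rule walk3[OF that(1-3)])
  qed
  have W3: "gdist ?V ?E x z \<le> enat 3" if "x \<in> ?V" "m \<in> ?V" "m' \<in> ?V" "z \<in> ?V"
    "adj2 p q s x m" "adj2 p q s m m'" "adj2 p q s m' z" for x m m' z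
  proof -
    have "{x,m} \<in> ?E" "{m,m'} \<in> ?E" "{m',z} \<in> ?E" using that(5-7) EE_iff by blast+
    then show ?thesis by (rule walk4[OF that(1-4)])
  qed
  have xy: "adj2 p q s p (p+s+q)" using assms(2) unfolding adj_def by simp
  from a show ?thesis
  proof (elim disjE)
    assume ha: "a < p"
    from b show ?thesis
    proof (elim disjE)
      assume "b < p" then show ?thesis using W1[OF aV bV] ha assms(5) unfolding adj_def by simp
    next
      assume "b = p" then show ?thesis using W1[OF aV bV] ha assms(2) unfolding adj_def by simp
    next
      assume hb: "b = p+s+q"
      have "adj2 p q s a p" using ha assms(2) unfolding adj_def by simp
      then show ?thesis using W2[OF aV xV bV] xy hb by simp
    next
      assume hb: "p+s \<le> b \<and> b < p+s+q"
      have "adj2 p q s a p" using ha assms(2) unfolding adj_def by simp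
      moreover have "adj2 p q s (p+s+q) b" using hb assms(2) unfolding adj_def by simp
      ultimately show ?thesis using W3[OF aV xV yV bV] xy ha hb by simp
    qed
  next
    assume ha: "a = p"
    from b show ?thesis
    proof (elim disjE)
      assume "b < p" then show ?thesis using W1[OF aV bV] ha assms(2) unfolding adj_def by simp
    next
      assume "b = p" then show ?thesis using assms(5) ha by simp
    next
      assume "b = p+s+q" then show ?thesis using W1[OF aV bV] ha xy by simp
    next
      assume hb: "p+s \<le> b \<and> b < p+s+q"
      have "adj2 p q s (p+s+q) b" using hb assms(2) unfolding adj_def by simp
      then show ?thesis using W2[OF aV yV bV] xy ha by simp
    qed
  next
    assume ha: "a = p+s+q"
    from b show ?thesis
    proof (elim disjE)
      assume hb: "b < p"
      have "adj2 p q s p b" using hb assms(2) unfolding adj_def by simp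
      then show ?thesis using W2[OF aV xV bV] xy ha by blast
    next
      assume "b = p" then show ?thesis using W1[OF aV bV] ha xy by auto
    next
      assume "b = p+s+q" then show ?thesis using assms(5) ha by simp
    next
      assume hb: "p+s \<le> b \<and> b < p+s+q"
      then show ?thesis using W1[OF aV bV] ha assms(2) unfolding adj_def by simp
    qed
  next
    assume ha: "p+s \<le> a \<and> a < p+s+q"
    from b show ?thesis
    proof (elim disjE)
      assume hb: "b < p"
      have "adj2 p q s a (p+s+q)" using ha assms(2) unfolding adj_def by simp
      moreover have "adj2 p q s p b" using hb assms(2) unfolding adj_def by simp
      ultimately show ?thesis using W3[OF aV yV xV bV] xy ha hb by auto
    next
      assume hb: "b = p"
      have "adj2 p q s a (p+s+q)" using ha assms(2) unfolding adj_def by simp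
      then show ?thesis using W2[OF aV yV bV] xy hb by auto
    next
      assume "b = p+s+q" then show ?thesis using W1[OF aV bV] ha assms(2) unfolding adj_def by simp
    next
      assume hb: "p+s \<le> b \<and> b < p+s+q"
      then show ?thesis using W1[OF aV bV] ha assms(5) unfolding adj_def by simp
    qed
  qed
qed

lemma lowG:
  assumes pc: "packing_coloring (VV p q s) (EE p q s) K c" and q1: "1 \<le> q" and qp: "q \<le> p" and sp: "s = p + 1"
  shows "p + q + 1 \<le> K"
proof -
  let ?V = "VV p q s" and ?E = "EE p q s"
  let ?H0 = "{..<p}" and ?L1 = "{p..<p+s}" and ?H2 = "{p+s..<p+s+q}" and ?L3 = "{p+s+q..<p+s+q+s}"
  have s1: "1 \<le> s" using sp by simp
  have inV: "x \<in> ?V" if "x < p+s+q+s" for x using that unfolding VV_def by simp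
  have subV: "A \<subseteq> ?V" if "\<And>x. x \<in> A \<Longrightarrow> x < p+s+q+s" for A using that inV by blast
  have edge: "{a,b} \<in> ?E" if "adj2 p q s a b" for a b using that EE_iff by blast
  consider (A) "\<exists>h\<in>?H0. c h = 1" | (B) "\<exists>h\<in>?H2. c h = 1" | (C) "\<forall>h\<in>?H0. c h \<noteq> 1" "\<forall>h\<in>?H2. c h \<noteq> 1"
    by blast
  then show ?thesis
  proof cases
    case A
    then obtain h where h: "h \<in> ?H0" "c h = 1" by blast
    have "card ?L1 + card ?H0 \<le> K"
    proof (rule hub_one[OF pc _ _ _ _ _ h])
      show "?H0 \<subseteq> ?V" by (rule subV) simp
      show "?L1 \<subseteq> ?V" by (rule subV) simp
      show "finite ?H0" "finite ?L1" by simp_all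
      show "?H0 \<inter> ?L1 = {}" by auto
      show "{a,b} \<in> ?E" if "a \<in> ?H0" "b \<in> ?H0" "a \<noteq> b" for a b
        by (rule edge) (use that in \<open>simp add: adj_def\<close>)
      show "{a,b} \<in> ?E" if "a \<in> ?H0" "b \<in> ?L1" for a b
        by (rule edge) (use that in \<open>simp add: adj_def\<close>)
    qed
    then show ?thesis using sp qp by simp
  next
    case B
    then obtain h where h: "h \<in> ?H2" "c h = 1" by blast
    have "card ?L3 + card ?H2 \<le> K"
    proof (rule hub_one[OF pc _ _ _ _ _ h])
      show "?H2 \<subseteq> ?V" by (rule subV) simp
      show "?L3 \<subseteq> ?V" by (rule subV) simp
      show "finite ?H2" "finite ?L3" by simp_all
      show "?H2 \<inter> ?L3 = {}" by auto
      show "{a,b} \<in> ?E" if "a \<in> ?H2" "b \<in> ?H2" "a \<noteq> b" for a b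
        by (rule edge) (use that in \<open>simp add: adj_def\<close>)
      show "{a,b} \<in> ?E" if "a \<in> ?H2" "b \<in> ?L3" for a b
        by (rule edge) (use that in \<open>simp add: adj_def\<close>)
    qed
    then show ?thesis using sp qp by simp
  next
    case C
    have xV: "p \<in> ?V" by (rule inV) (use s1 in simp)
    have yV: "p+s+q \<in> ?V" by (rule inV) (use s1 in simp)
    have exy: "{p, p+s+q} \<in> ?E" by (rule edge) (use s1 in \<open>simp add: adj_def\<close>)
    have "c p \<noteq> 1 \<or> c (p+s+q) \<noteq> 1"
    proof (rule ccontr)
      assume "\<not> (c p \<noteq> 1 \<or> c (p+s+q) \<noteq> 1)"
      then have eq: "c p = c (p+s+q)" and c1: "c p = 1" by auto
      have ne: "p \<noteq> p+s+q" using s1 by simp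
      have "c p < 1" by (rule pc_lt[OF pc xV yV ne eq walk2[OF xV yV exy]])
      then show False using c1 by simp
    qed
    then obtain w where w: "w = p \<or> w = p+s+q" "c w \<noteq> 1" by blast
    define R where "R = {g \<in> ?H2. c g \<noteq> 2}"
    define S where "S = {g \<in> ?H2. c g = 2}"
    have "card S \<le> Suc 0"
    proof (subst card_le_Suc0_iff_eq)
      show "finite S" unfolding S_def by simp
      show "\<forall>a\<in>S. \<forall>b\<in>S. a = b"
      proof (intro ballI, rule ccontr)
        fix a b assume ab: "a \<in> S" "b \<in> S" "a \<noteq> b"
        have aV: "a \<in> ?V" using ab(1) unfolding S_def by (intro inV) auto
        have bV: "b \<in> ?V" using ab(2) unfolding S_def by (intro inV) auto
        have eq: "c a = c b" and c2: "c a = 2" using ab unfolding S_def by auto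
        have "{a,b} \<in> ?E" by (rule edge) (use ab in \<open>auto simp: adj_def S_def\<close>)
        then have "c a < 1" using pc_lt[OF pc aV bV ab(3) eq walk2[OF aV bV]] by blast
        then show False using c2 by simp
      qed
    qed
    moreover have "card R + card S = q"
    proof -
      have "card (R \<union> S) = card R + card S"
        by (rule card_Un_disjoint) (auto simp: R_def S_def)
      moreover have "R \<union> S = ?H2" unfolding R_def S_def by auto
      ultimately show ?thesis by simp
    qed
    ultimately have cR: "q \<le> card R + 1" by simp
    define T where "T = ?H0 \<union> {w} \<union> R"
    have fR: "finite R" unfolding R_def by simp
    have cT: "card T = p + 1 + card R"
    proof -
      have d1: "?H0 \<inter> {w} = {}" using w(1) by auto
      have d2: "(?H0 \<union> {w}) \<inter> R = {}" using w(1) s1 unfolding R_def by auto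
      have "card (?H0 \<union> {w}) = p + 1" using d1 by (subst card_Un_disjoint) auto
      moreover have "card T = card (?H0 \<union> {w}) + card R"
        unfolding T_def by (rule card_Un_disjoint) (use fR d2 in auto)
      ultimately show ?thesis by simp
    qed
    have "card T \<le> K - 1"
    proof (rule card_ge2[OF pc])
      show "T \<subseteq> ?V" unfolding T_def R_def using w(1) s1 by (intro subV) auto
      show "finite T" unfolding T_def using fR by simp
      show "c a \<noteq> 1" if "a \<in> T" for a
        using that C w unfolding T_def R_def by auto
      fix a b assume ab: "a \<in> T" "b \<in> T" "a \<noteq> b"
      have ra: "a < p \<or> a = p \<or> a = p+s+q \<or> (p+s \<le> a \<and> a < p+s+q)"
        using ab(1) w(1) unfolding T_def R_def by auto
      have rb: "b < p \<or> b = p \<or> b = p+s+q \<or> (p+s \<le> b \<and> b < p+s+q)"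
        using ab(2) w(1) unfolding T_def R_def by auto
      have H2R: "c x \<noteq> 2" if "x \<in> T" "p+s \<le> x" "x < p+s+q" for x
        using that w(1) s1 unfolding T_def R_def by auto
      from distG[OF q1 s1 ra rb ab(3)]
      show "gdist ?V ?E a b \<le> enat 2 \<or> (gdist ?V ?E a b \<le> enat 3 \<and> (c a \<noteq> 2 \<or> c b \<noteq> 2))"
        using H2R ab(1,2) by blast
    qed
    then show ?thesis using cT cR by linarith
  qed
qed

lemma constrI:
  assumes "1 \<le> q" "q \<le> p"
  shows "finite_simple_graph (VV p q (p+1)) (EE p q (p+1)) \<and> {p, p+(p+1)+q} \<in> EE p q (p+1) \<and>
    packing_chromatic_number (VV p q (p+1)) (EE p q (p+1)) = p + q + 1 \<and>
    packing_chromatic_number (VV p q (p+1)) (EE p q (p+1) - {{p, p+(p+1)+q}}) = p + 1"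
proof (intro conjI)
  show "finite_simple_graph (VV p q (p+1)) (EE p q (p+1))" by (rule fsg)
  show "{p, p+(p+1)+q} \<in> EE p q (p+1)" unfolding EE_iff adj_def by simp
  show "packing_chromatic_number (VV p q (p+1)) (EE p q (p+1)) = p + q + 1"
  proof (rule pcn_eq)
    show "packing_coloring (VV p q (p+1)) (EE p q (p+1)) (p+q+1) (cG p q (p+1))"
      by (rule colG) (use assms in simp_all)
    fix K' c' assume "packing_coloring (VV p q (p+1)) (EE p q (p+1)) K' c'"
    then show "p + q + 1 \<le> K'" by (rule lowG) (use assms in simp_all)
  qed
  show "packing_chromatic_number (VV p q (p+1)) (EE p q (p+1) - {{p, p+(p+1)+q}}) = p + 1"
  proof (rule pcn_eq)
    show "packing_coloring (VV p q (p+1)) (EE p q (p+1) - {{p, p+(p+1)+q}}) (p+1) (cGe p q (p+1))"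
      by (rule colGe) (use assms in simp_all)
    fix K' c' assume "packing_coloring (VV p q (p+1)) (EE p q (p+1) - {{p, p+(p+1)+q}}) K' c'"
    then show "p + 1 \<le> K'" by (rule lowGe) simp
  qed
qed

definition E2 :: "nat \<Rightarrow> nat set set" where
  "E2 n = {{a,b} | a b. a < n \<and> b < n \<and> a \<noteq> b} \<union> {{n-1, n}}"

definition c2 :: "nat \<Rightarrow> nat \<Rightarrow> nat" where
  "c2 n x = (if x = n then 1 else x + 1)"

lemma low2:
  assumes "packing_coloring {..n} (E2 n - {{n-1,n}}) K c"
  shows "n \<le> K"
proof -
  have "card {..<n} \<le> K"
  proof (rule clique_card[OF assms])
    show "{..<n} \<subseteq> {..n}" by auto
    show "finite {..<n}" by simp
    fix a b assume ab: "a \<in> {..<n}" "b \<in> {..<n}" "a \<noteq> b"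
    then have "{a,b} \<in> E2 n" unfolding E2_def by blast
    moreover have "{a,b} \<noteq> {n-1,n}" using ab by (auto simp: doubleton_eq_iff)
    ultimately show "{a,b} \<in> E2 n - {{n-1,n}}" by blast
  qed
  then show ?thesis by simp
qed

lemma constrII:
  assumes "2 \<le> n"
  shows "finite_simple_graph {..n} (E2 n) \<and> {n-1, n} \<in> E2 n \<and>
    packing_chromatic_number {..n} (E2 n) = n \<and>
    packing_chromatic_number {..n} (E2 n - {{n-1, n}}) = n"
proof -
  have col: "packing_coloring {..n} (E2 n) n (c2 n)"
    unfolding packing_coloring_def
  proof (intro conjI ballI impI)
    fix v assume "v \<in> {..n}" then show "c2 n v \<in> {1..n}" using assms unfolding c2_def by auto
  next
    fix u v assume uv: "u \<in> {..n}" "v \<in> {..n}" "u \<noteq> v \<and> c2 n u = c2 n v"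
    then have h: "(u = n \<and> v = 0) \<or> (u = 0 \<and> v = n)" unfolding c2_def by (auto split: if_splits)
    then have cu: "c2 n u = 1" unfolding c2_def by auto
    have "{u,v} \<notin> E2 n" using h assms unfolding E2_def by (auto simp: doubleton_eq_iff)
    then have le: "enat 2 \<le> gdist {..n} (E2 n) u v" using nonadj_gdist[of u v] uv(3) by simp
    have lt: "enat (c2 n u) < enat 2" using cu by simp
    show "enat (c2 n u) < gdist {..n} (E2 n) u v" by (rule less_le_trans[OF lt le])
  qed
  have colm: "packing_coloring {..n} (E2 n - {{n-1,n}}) n (c2 n)" by (rule pc_mono[OF col]) auto
  show ?thesis
  proof (intro conjI)
    show "finite_simple_graph {..n} (E2 n)"
      unfolding finite_simple_graph_def E2_def using assms by (auto simp: card_insert_if)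
    show "{n-1, n} \<in> E2 n" unfolding E2_def by simp
    show "packing_chromatic_number {..n} (E2 n) = n"
    proof (rule pcn_eq[OF col])
      fix K' c' assume "packing_coloring {..n} (E2 n) K' c'"
      then have "packing_coloring {..n} (E2 n - {{n-1,n}}) K' c'" by (rule pc_mono) auto
      then show "n \<le> K'" by (rule low2)
    qed
    show "packing_chromatic_number {..n} (E2 n - {{n-1, n}}) = n"
      by (rule pcn_eq[OF colm]) (rule low2)
  qed
qed

theorem theorem2p2:
  fixes k n :: nat
  assumes "k \<ge> 3" and "k + 1 \<le> 2 * n" and "n \<le> k"
  shows "\<exists>(V :: nat set) (E :: nat set set) e.
           finite_simple_graph V E \<and> e \<in> E \<and>
           packing_chromatic_number V E = k \<and>
           packing_chromatic_number V (E - {e}) = n"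
proof (cases "n = k")
  case True
  have "2 \<le> n" using assms True by simp
  from constrII[OF this] show ?thesis using True by blast
next
  case False
  define p where "p = n - 1"
  define q where "q = k - n"
  have q1: "1 \<le> q" and qp: "q \<le> p" using assms False unfolding p_def q_def by auto
  have k: "p + q + 1 = k" and n: "p + 1 = n" using assms False unfolding p_def q_def by auto
  from constrI[OF q1 qp] show ?thesis unfolding k n by blast
qed


end
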